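(* Let $k\ge 1$ and let $Q_k$ be the hypercube of dimension $k$. For any two vertices $u$ and $v$ of $Q_k$, perfect state transfer from $u$ to $v$ is possible by a single CQC-hopping; that is, there exist a spanning subgraph $H$ of $Q_k$ (with $V(H)=V(Q_k)$ and $E(H)\subseteq E(Q_k)$) and a time $t_0>0$ such that $|\langle v|\exp(-it_0A(H))|u\rangle|=1$.
   Context: The hypercube $Q_k$ is the graph with vertex set $\{0,1\}^k$, two vertices being adjacent if and only if their labels have Hamming distance $1$. For a graph $H$ with adjacency matrix $A(H)$, associate to each vertex $x$ the standard basis vector $|x\rangle\in\mathbb{C}^{|V(H)|}$; $H$ has perfect state transfer from $a$ to $b$ at time $t_0$ if $|\langle b|\exp(-it_0A(H))|a\rangle|=1$. A CQC-hopping from $u$ to $v$ on a graph $G$ consists of switching off a set of edges of $G$ to obtain a spanning subgraph $H$ (same vertex set, subset of the edges), performing perfect state transfer from $u$ to $v$ in $H$, and then switching the removed edges back on. *)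

theory Defs
  imports "HOL-Analysis.Analysis"
begin

definition hcube_vertices :: "nat \<Rightarrow> bool list set" where
  "hcube_vertices k = {x. length x = k}"

definition hamming :: "bool list \<Rightarrow> bool list \<Rightarrow> nat" where
  "hamming x y = card {i. i < length x \<and> x ! i \<noteq> y ! i}"

definition hcube_adj :: "nat \<Rightarrow> bool list \<Rightarrow> bool list \<Rightarrow> bool" where
  "hcube_adj k x y \<longleftrightarrow> x \<in> hcube_vertices k \<and> y \<in> hcube_vertices k \<and> hamming x y = 1"

text \<open>A spanning subgraph of Q_k: same vertex set, a symmetric edge relation whose
  edges are edges of Q_k.\<close>
definition spanning_subgraph_hcube :: "nat \<Rightarrow> (bool list \<Rightarrow> bool list \<Rightarrow> bool) \<Rightarrow> bool" where
  "spanning_subgraph_hcube k E \<longleftrightarrow>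
     (\<forall>x y. E x y \<longrightarrow> E y x) \<and> (\<forall>x y. E x y \<longrightarrow> hcube_adj k x y)"

definition adj_matrix :: "('a \<Rightarrow> 'a \<Rightarrow> bool) \<Rightarrow> 'a \<Rightarrow> 'a \<Rightarrow> complex" where
  "adj_matrix E x y = (if E x y then 1 else 0)"

fun mat_pow :: "'a set \<Rightarrow> ('a \<Rightarrow> 'a \<Rightarrow> complex) \<Rightarrow> nat \<Rightarrow> 'a \<Rightarrow> 'a \<Rightarrow> complex" where
  "mat_pow V M 0 x y = (if x = y then 1 else 0)"
| "mat_pow V M (Suc n) x y = (\<Sum>z\<in>V. M x z * mat_pow V M n z y)"

text \<open>Entry (b,a) of the matrix exponential exp(c M) = sum_n c^n M^n / n!, i.e. <b| exp(c M) |a>.\<close>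
definition mat_exp_entry :: "'a set \<Rightarrow> complex \<Rightarrow> ('a \<Rightarrow> 'a \<Rightarrow> complex) \<Rightarrow> 'a \<Rightarrow> 'a \<Rightarrow> complex" where
  "mat_exp_entry V c M b a = (\<Sum>n. (c ^ n / of_nat (fact n)) * mat_pow V M n b a)"

definition pst :: "'a set \<Rightarrow> ('a \<Rightarrow> 'a \<Rightarrow> bool) \<Rightarrow> 'a \<Rightarrow> 'a \<Rightarrow> real \<Rightarrow> bool" where
  "pst V E a b t0 \<longleftrightarrow> cmod (mat_exp_entry V (- \<i> * of_real t0) (adj_matrix E) b a) = 1"

end

theory Submission
  imports Defs
begin

definition flipv :: "bool list \<Rightarrow> nat \<Rightarrow> bool list" where
  "flipv x i = x[i := \<not> x ! i]"

definition Eg :: "nat \<Rightarrow> nat set \<Rightarrow> bool list \<Rightarrow> bool list \<Rightarrow> bool" where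
  "Eg k D x y \<longleftrightarrow> x \<in> hcube_vertices k \<and> y \<in> hcube_vertices k \<and> hamming x y = 1
     \<and> (\<forall>i<k. x ! i \<noteq> y ! i \<longrightarrow> i \<in> D)"

lemma hamming_sym: "length x = length y \<Longrightarrow> hamming x y = hamming y x"
  unfolding hamming_def by (metis (mono_tags, lifting))

lemma Eg_char:
  assumes x: "x \<in> hcube_vertices k" and D: "D \<subseteq> {..<k}"
  shows "{y \<in> hcube_vertices k. Eg k D x y} = flipv x ` D"
proof
  show "{y \<in> hcube_vertices k. Eg k D x y} \<subseteq> flipv x ` D"
  proof
    fix y assume "y \<in> {y \<in> hcube_vertices k. Eg k D x y}"
    hence y: "y \<in> hcube_vertices k" and h: "hamming x y = 1" and dd: "\<forall>i<k. x ! i \<noteq> y ! i \<longrightarrow> i \<in> D"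
      by (auto simp: Eg_def)
    have lx: "length x = k" and ly: "length y = k" using x y by (auto simp: hcube_vertices_def)
    from h obtain i where i: "{j. j < length x \<and> x ! j \<noteq> y ! j} = {i}"
      unfolding hamming_def by (auto simp: card_1_singleton_iff)
    hence ik: "i < k" and xi: "x ! i \<noteq> y ! i" using lx by auto
    have "y = flipv x i"
    proof (rule nth_equalityI)
      show "length y = length (flipv x i)" using lx ly by (simp add: flipv_def)
      fix j assume "j < length y"
      thus "y ! j = flipv x i ! j" using i xi lx ly
        by (cases "j = i") (auto simp: flipv_def)
    qed
    moreover have "i \<in> D" using dd ik xi by auto
    ultimately show "y \<in> flipv x ` D" by auto
  qed
next
  show "flipv x ` D \<subseteq> {y \<in> hcube_vertices k. Eg k D x y}"
  proof
    fix y assume "y \<in> flipv x ` D"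
    then obtain i where iD: "i \<in> D" and yd: "y = flipv x i" by auto
    have lx: "length x = k" using x by (auto simp: hcube_vertices_def)
    have ik: "i < k" using iD D by auto
    have "{j. j < length x \<and> x ! j \<noteq> y ! j} = {i}"
      using ik lx by (auto simp: yd flipv_def nth_list_update)
    hence "hamming x y = 1" by (simp add: hamming_def)
    moreover have "\<forall>j<k. x ! j \<noteq> y ! j \<longrightarrow> j \<in> D"
      using iD ik lx by (auto simp: yd flipv_def nth_list_update split: if_splits)
    moreover have "y \<in> hcube_vertices k" using lx by (simp add: yd flipv_def hcube_vertices_def)
    ultimately show "y \<in> {y \<in> hcube_vertices k. Eg k D x y}" using x by (simp add: Eg_def)
  qed
qed

lemma finite_V: "finite (hcube_vertices k)"
proof -
  have "hcube_vertices k = {xs. set xs \<subseteq> (UNIV::bool set) \<and> length xs = k}"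
    by (auto simp: hcube_vertices_def)
  thus ?thesis using finite_lists_length_eq[of "UNIV::bool set" k] by simp
qed

definition phi :: "nat \<Rightarrow> bool list \<Rightarrow> nat set \<Rightarrow> nat set \<Rightarrow> bool list \<Rightarrow> complex" where
  "phi k u D s x = (if x \<in> hcube_vertices k \<and> (\<forall>i<k. i \<notin> D \<longrightarrow> x ! i = u ! i)
     then (-1) ^ card {j \<in> s. x ! j \<noteq> u ! j} else 0)"

definition lam :: "nat set \<Rightarrow> nat set \<Rightarrow> complex" where
  "lam D s = of_nat (card D) - 2 * of_nat (card s)"

lemma phi_flip:
  assumes x: "x \<in> hcube_vertices k" and iD: "i \<in> D" and D: "D \<subseteq> {..<k}" and s: "s \<subseteq> D"
  shows "phi k u D s (flipv x i) = (if i \<in> s then -1 else 1) * phi k u D s x"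
proof -
  have lx: "length x = k" using x by (simp add: hcube_vertices_def)
  have ik: "i < k" using iD D by auto
  have fV: "flipv x i \<in> hcube_vertices k" using lx by (simp add: flipv_def hcube_vertices_def)
  have fl: "\<And>j. j \<noteq> i \<Longrightarrow> flipv x i ! j = x ! j" by (simp add: flipv_def)
  have fi: "flipv x i ! i = (\<not> x ! i)" using ik lx by (simp add: flipv_def)
  have fl2: "\<And>j. flipv x i ! j = (if j = i then \<not> x ! i else x ! j)" using fl fi by metis
  have agree: "(\<forall>j<k. j \<notin> D \<longrightarrow> flipv x i ! j = u ! j) = (\<forall>j<k. j \<notin> D \<longrightarrow> x ! j = u ! j)"
  proof -
    have "flipv x i ! j = x ! j" if "j \<notin> D" for j
    proof -
      have "i \<noteq> j" using iD that by auto
      thus ?thesis by (simp add: flipv_def)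
    qed
    thus ?thesis by auto
  qed
  have fs: "finite s" using finite_subset[OF subset_trans[OF s D]] by simp
  define Ob where "Ob = {j \<in> s. x ! j \<noteq> u ! j}"
  have fO: "finite Ob" using fs Ob_def by simp
  have sgn: "(-1::complex) ^ card {j \<in> s. flipv x i ! j \<noteq> u ! j} = (if i \<in> s then -1 else 1) * (-1) ^ card Ob"
  proof (cases "i \<in> s")
    case False
    hence "{j \<in> s. flipv x i ! j \<noteq> u ! j} = Ob" unfolding Ob_def
      using fl by (metis (no_types, lifting))
    thus ?thesis using False by simp
  next
    case True
    show ?thesis
    proof (cases "i \<in> Ob")
      case iO: True
      hence "{j \<in> s. flipv x i ! j \<noteq> u ! j} = Ob - {i}" unfolding Ob_def
        by (auto simp: fl2)
      moreover have "card Ob = Suc (card (Ob - {i}))" using iO fO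
        by (metis card_Suc_Diff1)
      ultimately show ?thesis using True by simp
    next
      case iO: False
      hence "{j \<in> s. flipv x i ! j \<noteq> u ! j} = insert i Ob" unfolding Ob_def
        using True by (auto simp: fl2)
      moreover have "card (insert i Ob) = Suc (card Ob)" using iO fO by simp
      ultimately show ?thesis using True by simp
    qed
  qed
  show ?thesis
    unfolding phi_def using fV x agree sgn Ob_def by simp blast
qed

lemma eigen:
  assumes x: "x \<in> hcube_vertices k" and D: "D \<subseteq> {..<k}" and s: "s \<subseteq> D"
  shows "(\<Sum>y\<in>hcube_vertices k. adj_matrix (Eg k D) x y * phi k u D s y) = lam D s * phi k u D s x"
proof -
  have fD: "finite D" using finite_subset[OF D] by simp
  have "(\<Sum>y\<in>hcube_vertices k. adj_matrix (Eg k D) x y * phi k u D s y)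
      = (\<Sum>y\<in>{y \<in> hcube_vertices k. Eg k D x y}. phi k u D s y)"
    unfolding sum.inter_filter[OF finite_V] adj_matrix_def by (rule sum.cong) auto
  also have "\<dots> = (\<Sum>y\<in>flipv x ` D. phi k u D s y)" using Eg_char[OF x D] by simp
  also have "\<dots> = (\<Sum>i\<in>D. phi k u D s (flipv x i))"
  proof (rule sum.reindex[unfolded comp_def])
    show "inj_on (flipv x) D"
    proof
      fix i j assume "i \<in> D" "j \<in> D" "flipv x i = flipv x j"
      moreover have "length x = k" using x by (simp add: hcube_vertices_def)
      ultimately show "i = j" using D unfolding flipv_def
        by (metis (no_types, lifting) lessThan_iff nth_list_update_eq nth_list_update_neq subsetD)
    qed
  qed
  also have "\<dots> = (\<Sum>i\<in>D. (if i \<in> s then -1 else 1) * phi k u D s x)"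
    using phi_flip[OF x _ D s] by simp
  also have "\<dots> = (\<Sum>i\<in>D. (if i \<in> s then -1 else 1 :: complex)) * phi k u D s x"
    by (simp add: sum_distrib_right)
  also have "(\<Sum>i\<in>D. (if i \<in> s then -1 else 1 :: complex)) = lam D s"
  proof -
    have "(\<Sum>i\<in>D. (if i \<in> s then -1 else 1 :: complex)) = - of_nat (card (D \<inter> s)) + of_nat (card (D - s))"
      using fD by (simp add: sum.If_cases Int_def Diff_eq)
    also have "D \<inter> s = s" using s by auto
    also have "card (D - s) = card D - card s" using s fD by (simp add: card_Diff_subset finite_subset)
    also have "card s \<le> card D" using s fD by (simp add: card_mono)
    ultimately show ?thesis unfolding lam_def by (simp add: of_nat_diff)
  qed
  finally show ?thesis by simp
qed


lemma delta:
  assumes u: "u \<in> hcube_vertices k" and x: "x \<in> hcube_vertices k" and D: "D \<subseteq> {..<k}"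
  shows "(\<Sum>s\<in>Pow D. phi k u D s x) = (if x = u then 2 ^ card D else 0)"
proof (cases "\<forall>i<k. i \<notin> D \<longrightarrow> x ! i = u ! i")
  case False
  hence "x \<noteq> u" by auto
  moreover have "\<And>s. phi k u D s x = 0" using False by (simp add: phi_def)
  ultimately show ?thesis by simp
next
  case agr: True
  have fD: "finite D" using finite_subset[OF D] by simp
  define T where "T = {j \<in> D. x ! j \<noteq> u ! j}"
  have ph: "phi k u D s x = (-1) ^ card (s \<inter> T)" if "s \<in> Pow D" for s
  proof -
    have "{j \<in> s. x ! j \<noteq> u ! j} = s \<inter> T" using that by (auto simp: T_def)
    thus ?thesis using agr x by (simp add: phi_def)
  qed
  show ?thesis
  proof (cases "x = u")
    case True
    hence "T = {}" by (simp add: T_def)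
    hence "(\<Sum>s\<in>Pow D. phi k u D s x) = (\<Sum>s\<in>Pow D. 1)" using ph by simp
    also have "\<dots> = 2 ^ card D" using fD by (simp add: card_Pow)
    finally show ?thesis using True by simp
  next
    case False
    have lx: "length x = k" and lu: "length u = k" using x u by (auto simp: hcube_vertices_def)
    have "\<exists>j<k. x ! j \<noteq> u ! j"
    proof (rule ccontr)
      assume "\<not> (\<exists>j<k. x ! j \<noteq> u ! j)"
      hence "x = u" using lx lu by (auto intro: nth_equalityI)
      thus False using False by simp
    qed
    then obtain j where "j < k" "x ! j \<noteq> u ! j" by blast
    hence jT: "j \<in> T" using agr by (auto simp: T_def)
    define g where "g i = (if i \<in> T then -1 else (1::complex))" for i
    have "(\<Prod>i\<in>D. g i + 1) = (\<Sum>X\<in>Pow D. (\<Prod>i\<in>X. g i) * (\<Prod>i\<in>D-X. 1))"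
      by (rule prod_add[OF fD])
    moreover have "(\<Prod>i\<in>D. g i + 1) = 0"
      using jT fD by (simp add: T_def g_def prod_zero_iff) (auto simp: T_def)
    moreover have "(\<Prod>i\<in>X. g i) = (-1) ^ card (X \<inter> T)" if "X \<in> Pow D" for X
    proof -
      have fX: "finite X" using that fD finite_subset by auto
      have "(\<Prod>i\<in>X. g i) = (\<Prod>i\<in>X \<inter> {i. i \<in> T}. -1) * (\<Prod>i\<in>X - {i. i \<in> T}. 1)"
        unfolding g_def using prod.If_cases[OF fX, of "\<lambda>i. i \<in> T" "\<lambda>_. -1" "\<lambda>_. 1"] by simp
      thus ?thesis by simp
    qed
    ultimately have "(\<Sum>X\<in>Pow D. (-1::complex) ^ card (X \<inter> T)) = 0" by simp
    thus ?thesis using ph False by simp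
  qed
qed

lemma pow_formula:
  assumes u: "u \<in> hcube_vertices k" and D: "D \<subseteq> {..<k}"
  shows "x \<in> hcube_vertices k \<Longrightarrow> mat_pow (hcube_vertices k) (adj_matrix (Eg k D)) n x u
     = (\<Sum>s\<in>Pow D. lam D s ^ n * phi k u D s x) / 2 ^ card D"
proof (induction n arbitrary: x)
  case 0
  thus ?case using delta[OF u 0 D] by simp
next
  case (Suc n)
  let ?V = "hcube_vertices k" and ?A = "adj_matrix (Eg k D)"
  have "mat_pow ?V ?A (Suc n) x u = (\<Sum>z\<in>?V. ?A x z * ((\<Sum>s\<in>Pow D. lam D s ^ n * phi k u D s z) / 2 ^ card D))"
    using Suc.IH by simp
  also have "\<dots> = (\<Sum>z\<in>?V. \<Sum>s\<in>Pow D. lam D s ^ n * (?A x z * phi k u D s z)) / 2 ^ card D"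
    by (simp add: sum_divide_distrib sum_distrib_left mult.left_commute)
  also have "\<dots> = (\<Sum>s\<in>Pow D. lam D s ^ n * (\<Sum>z\<in>?V. ?A x z * phi k u D s z)) / 2 ^ card D"
    by (subst sum.swap) (simp add: sum_distrib_left)
  also have "\<dots> = (\<Sum>s\<in>Pow D. lam D s ^ Suc n * phi k u D s x) / 2 ^ card D"
    using eigen[OF Suc.prems D] by (intro arg_cong[where f="\<lambda>t. t / _"] sum.cong) auto
  finally show ?case .
qed

lemma exp_sums_c: "(\<lambda>n. (z::complex) ^ n / of_nat (fact n)) sums exp z"
proof -
  have "(\<lambda>n. z ^ n /\<^sub>R fact n) = (\<lambda>n. z ^ n / of_nat (fact n))"
    by (rule ext) (simp add: scaleR_conv_of_real divide_inverse mult.commute)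
  thus ?thesis using exp_converges[of z] by simp
qed


lemma exp_entry_formula:
  assumes u: "u \<in> hcube_vertices k" and D: "D \<subseteq> {..<k}" and v: "v \<in> hcube_vertices k"
  shows "mat_exp_entry (hcube_vertices k) c (adj_matrix (Eg k D)) v u
     = (\<Sum>s\<in>Pow D. exp (c * lam D s) * phi k u D s v) / 2 ^ card D"
proof -
  have fD: "finite D" using finite_subset[OF D] by simp
  have "(\<lambda>n. \<Sum>s\<in>Pow D. (c * lam D s) ^ n / of_nat (fact n) * (phi k u D s v / 2 ^ card D))
     sums (\<Sum>s\<in>Pow D. exp (c * lam D s) * (phi k u D s v / 2 ^ card D))"
    by (intro sums_sum sums_mult2 exp_sums_c)
  moreover have "(\<lambda>n. \<Sum>s\<in>Pow D. (c * lam D s) ^ n / of_nat (fact n) * (phi k u D s v / 2 ^ card D))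
     = (\<lambda>n. c ^ n / of_nat (fact n) * mat_pow (hcube_vertices k) (adj_matrix (Eg k D)) n v u)"
    by (rule ext) (simp add: pow_formula[OF u D v] sum_distrib_left sum_divide_distrib power_mult_distrib mult.assoc)
  ultimately have "mat_exp_entry (hcube_vertices k) c (adj_matrix (Eg k D)) v u
     = (\<Sum>s\<in>Pow D. exp (c * lam D s) * (phi k u D s v / 2 ^ card D))"
    unfolding mat_exp_entry_def by (simp add: sums_iff)
  thus ?thesis by (simp add: sum_divide_distrib)
qed

theorem mainTheorem5:
  fixes k :: nat and u v :: "bool list"
  assumes "k \<ge> 1"
    and "u \<in> hcube_vertices k" and "v \<in> hcube_vertices k"
  shows "\<exists>E t0. spanning_subgraph_hcube k E \<and> t0 > 0 \<and> pst (hcube_vertices k) E u v t0"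
proof -
  note u = assms(2) and v = assms(3)
  define D where "D = {i. i < k \<and> u ! i \<noteq> v ! i}"
  have Dk: "D \<subseteq> {..<k}" by (auto simp: D_def)
  have fD: "finite D" using finite_subset[OF Dk] by simp
  have sp: "spanning_subgraph_hcube k (Eg k D)"
    unfolding spanning_subgraph_hcube_def
  proof (intro conjI allI impI)
    fix x y assume e: "Eg k D x y"
    thus "hcube_adj k x y" by (simp add: Eg_def hcube_adj_def)
    have "length x = length y" using e by (simp add: Eg_def hcube_vertices_def)
    thus "Eg k D y x" using e hamming_sym[of x y] by (auto simp: Eg_def)
  qed
  define c where "c = - \<i> * complex_of_real (pi / 2)"
  have ec: "exp c = - \<i>"
  proof -
    have "exp c = cis (- (pi / 2))" by (simp add: c_def cis_conv_exp)
    thus ?thesis by (simp add: cis.ctr complex_eq_iff)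
  qed
  have e2c: "exp (- 2 * c) = -1"
  proof -
    have "- 2 * c = \<i> * complex_of_real pi" by (simp add: c_def)
    thus ?thesis by simp
  qed
  have trm: "exp (c * lam D s) * phi k u D s v = (- \<i>) ^ card D" if "s \<in> Pow D" for s
  proof -
    have "{j \<in> s. v ! j \<noteq> u ! j} = s" using that by (auto simp: D_def)
    moreover have "\<forall>i<k. i \<notin> D \<longrightarrow> v ! i = u ! i" by (auto simp: D_def)
    ultimately have ph: "phi k u D s v = (-1) ^ card s" using v by (simp add: phi_def)
    have eq: "c * lam D s = of_nat (card D) * c + of_nat (card s) * (- 2 * c)"
      by (simp add: lam_def algebra_simps)
    have "exp (c * lam D s) = exp (of_nat (card D) * c) * exp (of_nat (card s) * (- 2 * c))"
      by (simp only: eq exp_add)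
    hence "exp (c * lam D s) = exp c ^ card D * exp (- 2 * c) ^ card s"
      by (simp only: exp_of_nat_mult)
    hence "exp (c * lam D s) = (- \<i>) ^ card D * (-1) ^ card s" using ec e2c by simp
    hence "exp (c * lam D s) * phi k u D s v = (- \<i>) ^ card D * ((-1) ^ card s * (-1) ^ card s)"
      using ph by simp
    also have "(-1::complex) ^ card s * (-1) ^ card s = 1"
      by (simp add: power_add[symmetric])
    finally show ?thesis by simp
  qed
  have "mat_exp_entry (hcube_vertices k) c (adj_matrix (Eg k D)) v u = (- \<i>) ^ card D"
  proof -
    have "mat_exp_entry (hcube_vertices k) c (adj_matrix (Eg k D)) v u
        = (\<Sum>s\<in>Pow D. (- \<i>) ^ card D) / 2 ^ card D"
      using exp_entry_formula[OF u Dk v] trm by simp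
    also have "\<dots> = (- \<i>) ^ card D" using fD by (simp add: card_Pow)
    finally show ?thesis .
  qed
  hence "pst (hcube_vertices k) (Eg k D) u v (pi / 2)"
    by (simp add: pst_def c_def norm_power)
  moreover have "(pi / 2::real) > 0" by simp
  ultimately show ?thesis using sp by blast
qed

end
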